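(* For $n\geqslant 1$ and $k\geqslant 0$, let $\mathfrak{e}_{n,k}$ be the number of words of length $n$ over the alphabet $\{1,\dots,k\}$ avoiding both patterns $010$ and $120$ (not required to use every letter). Then $$\mathfrak{e}_{n,k}=\sum_{d=1}^{k}\binom{k}{d}\frac{1}{d}\binom{n-1}{d-1}\binom{n+d}{d-1}.$$
   Context: A word contains a pattern $p$ if some subsequence is order-isomorphic to $p$; otherwise it avoids $p$. Avoiding $010$: no $i<j<l$ with $\omega_i=\omega_l<\omega_j$. Avoiding $120$: no $i<j<l$ with $\omega_l<\omega_i<\omega_j$. *)

theory Defs
  imports Complex_Main
begin

definition avoids_010 :: "nat list \<Rightarrow> bool" where
  "avoids_010 w \<longleftrightarrow> \<not> (\<exists>i j l. i < j \<and> j < l \<and> l < length w \<and>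
      w ! i = w ! l \<and> w ! l < w ! j)"

definition avoids_120 :: "nat list \<Rightarrow> bool" where
  "avoids_120 w \<longleftrightarrow> \<not> (\<exists>i j l. i < j \<and> j < l \<and> l < length w \<and>
      w ! l < w ! i \<and> w ! i < w ! j)"

definition e_count :: "nat \<Rightarrow> nat \<Rightarrow> nat" where
  "e_count n k = card {w :: nat list. length w = n \<and> set w \<subseteq> {1..k} \<and>
      avoids_010 w \<and> avoids_120 w}"

end

theory Submission
  imports Defs "HOL-Computational_Algebra.Polynomial"
begin


fun Tp :: "nat \<Rightarrow> nat \<Rightarrow> int poly" where
  "Tp 0 r = (if r = 0 then 1 else 0)"
| "Tp (Suc n) 0 = 0"
| "Tp (Suc n) (Suc r) = [:0,1:] * Tp n r + [:1,2:] * Tp n (Suc r) + [:1,1:] * Tp n (Suc (Suc r))"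

lemma Tp_zero: "Tp n 0 = (if n = 0 then 1 else 0)"
  by (cases n) auto

lemma Tp_conv: "Tp n (r + s) = (\<Sum>i\<le>n. Tp i r * Tp (n - i) s)"
proof (induction n arbitrary: r s)
  case 0
  then show ?case by simp
next
  case (Suc m)
  show ?case
  proof (cases r)
    case 0
    have "(\<Sum>i\<le>Suc m. Tp i 0 * Tp (Suc m - i) s) = (\<Sum>i\<in>{0}. Tp i 0 * Tp (Suc m - i) s)"
      by (rule sum.mono_neutral_right) (auto simp: Tp_zero)
    then show ?thesis using 0 by simp
  next
    case (Suc r')
    have "(\<Sum>i\<le>Suc m. Tp i r * Tp (Suc m - i) s) = (\<Sum>i\<le>m. Tp (Suc i) r * Tp (m - i) s)"
      by (subst sum.atMost_Suc_shift) (simp add: Suc del: Tp.simps(3))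
    also have "\<dots> = [:0,1:] * (\<Sum>i\<le>m. Tp i r' * Tp (m - i) s)
        + [:1,2:] * (\<Sum>i\<le>m. Tp i (Suc r') * Tp (m - i) s)
        + [:1,1:] * (\<Sum>i\<le>m. Tp i (Suc (Suc r')) * Tp (m - i) s)"
      by (simp only: Suc Tp.simps(3) sum_distrib_left sum.distrib distrib_right mult.assoc)
    also have "\<dots> = Tp (Suc m) (r + s)"
      using Suc.IH[of r' s] Suc.IH[of "Suc r'" s] Suc.IH[of "Suc (Suc r')" s] by (simp add: Suc)
    finally show ?thesis by simp
  qed
qed

lemma binom_rel: "(k+1) * (n choose (k+1)) = (n - k) * (n choose k)"
  using times_binomial_minus1_eq[of "k+1" n] binomial_absorb_comp[of n k] by simp

lemma binom_rel_int: "int (k+1) * int (n choose (k+1)) = (int n - int k) * int (n choose k)"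
proof (cases "k \<le> n")
  case True
  then show ?thesis using arg_cong[OF binom_rel[of k n], of int] by (simp add: of_nat_diff algebra_simps)
next
  case False
  then show ?thesis by (simp add: binomial_eq_0 not_le)
qed

lemma key_identity:
  fixes m e s :: nat
  shows "int m * int (s+1) * int ((m+1) choose (e+1)) * int ((m+e+2) choose (m+s+2)) =
    int (m+1) * (int s * int (m choose e) * int ((m+e) choose (m+s))
     + int (s+1) * int (m choose (e+1)) * int ((m+e+1) choose (m+s+1))
     + 2 * int (s+1) * int (m choose e) * int ((m+e) choose (m+s+1))
     + int (s+2) * int (m choose (e+1)) * int ((m+e+1) choose (m+s+2))
     + int (s+2) * int (m choose e) * int ((m+e) choose (m+s+2)))"
proof -
  define c where "c = int (m choose e)"
  define A where "A = int ((m+e) choose (m+s))"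
  define B where "B = int ((m+e) choose (m+s+1))"
  define C where "C = int ((m+e) choose (m+s+2))"
  define X1 where "X1 = int ((m+1) choose (e+1))"
  define X2 where "X2 = int (m choose (e+1))"
  have p1: "int ((m+e+1) choose (m+s+1)) = A + B"
    unfolding A_def B_def by (simp add: add.assoc[symmetric])
  have p2: "int ((m+e+1) choose (m+s+2)) = B + C"
    unfolding B_def C_def by (simp add: numeral_2_eq_2 add.assoc[symmetric])
  have p3: "int ((m+e+2) choose (m+s+2)) = A + 2*B + C"
    unfolding A_def B_def C_def by (simp add: numeral_2_eq_2 add.assoc[symmetric])
  have f1: "int (e+1) * X1 = int (m+1) * c"
    unfolding X1_def c_def using arg_cong[OF Suc_times_binomial[of e m], of int] by (simp add: algebra_simps)
  have f2: "int (e+1) * X2 = (int m - int e) * c"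
    unfolding X2_def c_def by (rule binom_rel_int)
  have rB: "int (m+s+1) * B = (int e - int s) * A"
    unfolding A_def B_def using binom_rel_int[of "m+s" "m+e"] by simp
  have rC: "int (m+s+2) * C = (int e - int s - 1) * B"
    unfolding C_def B_def using binom_rel_int[of "m+s+1" "m+e"] by (simp add: numeral_2_eq_2 add.assoc)
  have main: "int (e+1) * (int m * int (s+1) * X1 * (A + 2*B + C)) =
    int (e+1) * (int (m+1) * (int s * c * A + int (s+1) * X2 * (A+B) + 2 * int (s+1) * c * B
       + int (s+2) * X2 * (B+C) + int (s+2) * c * C))"
  proof -
    have L: "int (e+1) * (int m * int (s+1) * X1 * (A + 2*B + C)) = int m * int (s+1) * (int (e+1) * X1) * (A + 2*B + C)"
      by (simp add: algebra_simps)
    have R: "int (e+1) * (int (m+1) * (int s * c * A + int (s+1) * X2 * (A+B) + 2 * int (s+1) * c * B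
       + int (s+2) * X2 * (B+C) + int (s+2) * c * C)) =
       int (m+1) * (int (e+1) * int s * c * A + int (s+1) * (int (e+1) * X2) * (A+B) + 2 * int (e+1) * int (s+1) * c * B
       + int (s+2) * (int (e+1) * X2) * (B+C) + int (s+2) * int (e+1) * c * C)"
      by (simp add: algebra_simps)
    have z: "(int (m+s+1) * B - (int e - int s) * A) + (int (m+s+2) * C - (int e - int s - 1) * B) = 0"
      using rB rC by simp
    have z2: "int (m+1) * c * ((int (m+s+1) * B - (int e - int s) * A) + (int (m+s+2) * C - (int e - int s - 1) * B)) = 0"
      using z by simp
    show ?thesis unfolding L R f1 f2
      using z2 by (simp add: algebra_simps)
  qed
  have "int m * int (s+1) * X1 * (A + 2*B + C) =
    int (m+1) * (int s * c * A + int (s+1) * X2 * (A+B) + 2 * int (s+1) * c * B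
       + int (s+2) * X2 * (B+C) + int (s+2) * c * C)"
    using main by simp
  then show ?thesis unfolding p1 p2 p3 by (simp add: c_def A_def B_def C_def X1_def X2_def)
qed


lemma Tp_coeff_Suc_0: "coeff (Tp (Suc m) (Suc s)) 0 = coeff (Tp m (Suc s)) 0 + coeff (Tp m (Suc (Suc s))) 0"
  by (simp add: mult_pCons_left)

lemma Tp_coeff_Suc_Suc: "coeff (Tp (Suc m) (Suc s)) (Suc e) = coeff (Tp m s) e + coeff (Tp m (Suc s)) (Suc e)
   + 2 * coeff (Tp m (Suc s)) e + coeff (Tp m (Suc (Suc s))) (Suc e) + coeff (Tp m (Suc (Suc s))) e"
  by (simp add: mult_pCons_left)

lemma Tp_closed: "int n * coeff (Tp n r) d = int r * int (n choose d) * int ((n + d) choose (n + r))"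
proof (induction n arbitrary: r d)
  case 0
  then show ?case by (cases r) auto
next
  case (Suc m)
  show ?case
  proof (cases r)
    case 0
    then show ?thesis by simp
  next
    case (Suc s)
    show ?thesis
    proof (cases "m = 0")
      case True
      then show ?thesis using Suc
        by (cases d) (auto simp: mult_pCons_left coeff_pCons split: nat.splits)
    next
      case False
      show ?thesis
      proof (cases d)
        case 0
        have a1: "coeff (Tp m (Suc s)) 0 = 0" using Suc.IH[of "Suc s" 0] False by (simp add: binomial_eq_0)
        have a2: "coeff (Tp m (Suc (Suc s))) 0 = 0" using Suc.IH[of "Suc (Suc s)" 0] False by (simp add: binomial_eq_0)
        show ?thesis using 0 Suc a1 a2 by (simp add: Tp_coeff_Suc_0 binomial_eq_0)
      next
        case (Suc e)
        have h1: "int m * coeff (Tp m s) e = int s * int (m choose e) * int ((m+e) choose (m+s))"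
          using Suc.IH[of s e] by simp
        have h2: "int m * coeff (Tp m (Suc s)) (Suc e) = int (s+1) * int (m choose (e+1)) * int ((m+e+1) choose (m+s+1))"
          using Suc.IH[of "Suc s" "Suc e"] by simp
        have h3: "int m * coeff (Tp m (Suc s)) e = int (s+1) * int (m choose e) * int ((m+e) choose (m+s+1))"
          using Suc.IH[of "Suc s" e] by simp
        have h4: "int m * coeff (Tp m (Suc (Suc s))) (Suc e) = int (s+2) * int (m choose (e+1)) * int ((m+e+1) choose (m+s+2))"
          using Suc.IH[of "Suc (Suc s)" "Suc e"] by (simp add: numeral_2_eq_2)
        have h5: "int m * coeff (Tp m (Suc (Suc s))) e = int (s+2) * int (m choose e) * int ((m+e) choose (m+s+2))"
          using Suc.IH[of "Suc (Suc s)" e] by (simp add: numeral_2_eq_2)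
        have "int m * (int (Suc m) * coeff (Tp (Suc m) r) d) = int (m+1) * (
           int m * coeff (Tp m s) e + int m * coeff (Tp m (Suc s)) (Suc e)
           + 2 * (int m * coeff (Tp m (Suc s)) e) + int m * coeff (Tp m (Suc (Suc s))) (Suc e)
           + int m * coeff (Tp m (Suc (Suc s))) e)"
          using \<open>r = Suc s\<close> Suc by (simp add: Tp_coeff_Suc_Suc algebra_simps)
        also have "\<dots> = int (m+1) * (int s * int (m choose e) * int ((m+e) choose (m+s))
     + int (s+1) * int (m choose (e+1)) * int ((m+e+1) choose (m+s+1))
     + 2 * int (s+1) * int (m choose e) * int ((m+e) choose (m+s+1))
     + int (s+2) * int (m choose (e+1)) * int ((m+e+1) choose (m+s+2))
     + int (s+2) * int (m choose e) * int ((m+e) choose (m+s+2)))"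
          unfolding h1 h2 h3 h4 h5 by (simp add: algebra_simps)
        also have "\<dots> = int m * int (s+1) * int ((m+1) choose (e+1)) * int ((m+e+2) choose (m+s+2))"
          by (rule key_identity[symmetric])
        also have "\<dots> = int m * (int r * int (Suc m choose d) * int ((Suc m + d) choose (Suc m + r)))"
          using \<open>r = Suc s\<close> Suc by (simp add: numeral_2_eq_2 algebra_simps)
        finally show ?thesis using False by simp
      qed
    qed
  qed
qed



definition bad :: "nat list \<Rightarrow> bool" where
  "bad w \<longleftrightarrow> (\<exists>i j l. i < j \<and> j < l \<and> l < length w \<and> w ! l \<le> w ! i \<and> w ! i < w ! j)"

lemma avoids_iff_bad: "(avoids_010 w \<and> avoids_120 w) \<longleftrightarrow> \<not> bad w"
  unfolding avoids_010_def avoids_120_def bad_def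
  by (auto simp: le_less) (metis less_trans)+

definition cnd :: "nat \<Rightarrow> nat list \<Rightarrow> bool" where
  "cnd a v \<longleftrightarrow> (\<forall>c\<in>set (dropWhile (\<lambda>c. c \<le> a) v). a < c)"

fun gd :: "nat list \<Rightarrow> bool" where
  "gd [] = True"
| "gd (a # v) = (gd v \<and> cnd a v)"

lemma bad_Nil: "\<not> bad []" by (simp add: bad_def)

lemma bad_Cons: "bad (a # v) \<longleftrightarrow> bad v \<or> (\<exists>j l. j < l \<and> l < length v \<and> v ! l \<le> a \<and> a < v ! j)"
proof
  assume "bad (a # v)"
  then obtain i j l where h: "i < j" "j < l" "l < length (a#v)" "(a#v) ! l \<le> (a#v) ! i" "(a#v) ! i < (a#v) ! j"
    unfolding bad_def by blast
  show "bad v \<or> (\<exists>j l. j < l \<and> l < length v \<and> v ! l \<le> a \<and> a < v ! j)"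
  proof (cases i)
    case 0
    then show ?thesis using h
      by (cases j; cases l) auto
  next
    case (Suc i')
    obtain j' where j: "j = Suc j'" using h Suc by (cases j) auto
    obtain l' where l: "l = Suc l'" using h Suc by (cases l) auto
    have "bad v" unfolding bad_def
      by (rule exI[of _ i'], rule exI[of _ j'], rule exI[of _ l']) (use h Suc j l in auto)
    then show ?thesis by simp
  qed
next
  assume "bad v \<or> (\<exists>j l. j < l \<and> l < length v \<and> v ! l \<le> a \<and> a < v ! j)"
  then show "bad (a # v)"
  proof
    assume "bad v"
    then obtain i j l where h: "i < j" "j < l" "l < length v" "v ! l \<le> v ! i" "v ! i < v ! j"
      unfolding bad_def by blast
    then show ?thesis unfolding bad_def
      by (intro exI[of _ "Suc i"] exI[of _ "Suc j"] exI[of _ "Suc l"]) auto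
  next
    assume "\<exists>j l. j < l \<and> l < length v \<and> v ! l \<le> a \<and> a < v ! j"
    then obtain j l where h: "j < l" "l < length v" "v ! l \<le> a" "a < v ! j" by blast
    then show ?thesis unfolding bad_def
      by (intro exI[of _ 0] exI[of _ "Suc j"] exI[of _ "Suc l"]) auto
  qed
qed

lemma cnd_iff: "cnd a v \<longleftrightarrow> \<not> (\<exists>j l. j < l \<and> l < length v \<and> v ! l \<le> a \<and> a < v ! j)"
proof (induction v)
  case Nil
  then show ?case by (simp add: cnd_def)
next
  case (Cons c v)
  show ?case
  proof (cases "c \<le> a")
    case True
    have "cnd a (c # v) = cnd a v" using True by (simp add: cnd_def)
    moreover have "(\<exists>j l. j < l \<and> l < length (c#v) \<and> (c#v) ! l \<le> a \<and> a < (c#v) ! j) \<longleftrightarrow>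
                   (\<exists>j l. j < l \<and> l < length v \<and> v ! l \<le> a \<and> a < v ! j)"
    proof
      assume "\<exists>j l. j < l \<and> l < length (c#v) \<and> (c#v) ! l \<le> a \<and> a < (c#v) ! j"
      then obtain j l where h: "j < l" "l < length (c#v)" "(c#v) ! l \<le> a" "a < (c#v) ! j" by blast
      then show "\<exists>j l. j < l \<and> l < length v \<and> v ! l \<le> a \<and> a < v ! j"
        using True by (cases j; cases l) auto
    next
      assume "\<exists>j l. j < l \<and> l < length v \<and> v ! l \<le> a \<and> a < v ! j"
      then obtain j l where h: "j < l" "l < length v" "v ! l \<le> a" "a < v ! j" by blast
      then show "\<exists>j l. j < l \<and> l < length (c#v) \<and> (c#v) ! l \<le> a \<and> a < (c#v) ! j"
        by (intro exI[of _ "Suc j"] exI[of _ "Suc l"]) auto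
    qed
    ultimately show ?thesis using Cons.IH by simp
  next
    case False
    have "cnd a (c # v) \<longleftrightarrow> (\<forall>x\<in>set v. a < x)" using False by (auto simp: cnd_def)
    moreover have "(\<exists>j l. j < l \<and> l < length (c#v) \<and> (c#v) ! l \<le> a \<and> a < (c#v) ! j) \<longleftrightarrow>
                   \<not> (\<forall>x\<in>set v. a < x)"
    proof
      assume "\<exists>j l. j < l \<and> l < length (c#v) \<and> (c#v) ! l \<le> a \<and> a < (c#v) ! j"
      then obtain j l where h: "j < l" "l < length (c#v)" "(c#v) ! l \<le> a" "a < (c#v) ! j" by blast
      then obtain l' where "l = Suc l'" by (cases l) auto
      then have "l' < length v" "v ! l' \<le> a" using h by auto
      then show "\<not> (\<forall>x\<in>set v. a < x)" by (meson nth_mem not_less)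
    next
      assume "\<not> (\<forall>x\<in>set v. a < x)"
      then obtain l where "l < length v" "v ! l \<le> a" by (auto simp: in_set_conv_nth not_less)
      then show "\<exists>j l. j < l \<and> l < length (c#v) \<and> (c#v) ! l \<le> a \<and> a < (c#v) ! j"
        using False by (intro exI[of _ 0] exI[of _ "Suc l"]) auto
    qed
    ultimately show ?thesis by simp
  qed
qed

lemma good_iff_gd: "(avoids_010 w \<and> avoids_120 w) \<longleftrightarrow> gd w"
  unfolding avoids_iff_bad
  by (induction w) (auto simp: bad_Nil bad_Cons cnd_iff)



lemma dropWhile_gt: "\<forall>c\<in>set (y::nat list). a < c \<Longrightarrow> b \<le> a \<Longrightarrow> dropWhile (\<lambda>c. c \<le> b) y = y"
  by (cases y) auto

lemma takeWhile_gt: "\<forall>c\<in>set (y::nat list). a < c \<Longrightarrow> takeWhile (\<lambda>c. c \<le> a) y = []"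
  by (cases y) auto

lemma gd_append:
  assumes "\<forall>c\<in>set x. c \<le> a" "\<forall>c\<in>set y. a < c"
  shows "gd (x @ y) \<longleftrightarrow> gd x \<and> gd y"
  using assms(1)
proof (induction x)
  case Nil
  then show ?case by simp
next
  case (Cons b x)
  have ba: "b \<le> a" using Cons.prems by simp
  have "cnd b (x @ y) \<longleftrightarrow> cnd b x"
  proof (cases "\<forall>c\<in>set x. c \<le> b")
    case True
    have dw: "dropWhile (\<lambda>c. c \<le> b) x = []" using True by (simp add: dropWhile_eq_Nil_conv)
    show ?thesis using dropWhile_gt[OF assms(2) ba] assms(2) ba True
      by (auto simp: cnd_def dropWhile_append dw)
  next
    case False
    then show ?thesis using assms(2) ba
      by (auto simp: cnd_def dropWhile_append)
  qed
  then show ?case using Cons by auto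
qed

lemma split_unique:
  fixes x y x' y' :: "nat list"
  assumes "\<forall>c\<in>set x. c \<le> a" "\<forall>c\<in>set y. a < c" "\<forall>c\<in>set x'. c \<le> a" "\<forall>c\<in>set y'. a < c"
    and "x @ y = x' @ y'"
  shows "x = x' \<and> y = y'"
proof -
  have "takeWhile (\<lambda>c. c \<le> a) (x @ y) = x"
    using assms(1) takeWhile_gt[OF assms(2)] by (simp add: takeWhile_append)
  moreover have "takeWhile (\<lambda>c. c \<le> a) (x' @ y') = x'"
    using assms(3) takeWhile_gt[OF assms(4)] by (simp add: takeWhile_append)
  ultimately have "x = x'" using assms(5) by simp
  then show ?thesis using assms(5) by simp
qed

definition W :: "nat \<Rightarrow> nat set \<Rightarrow> nat list set" where
  "W n S = {w. length w = n \<and> set w = S \<and> gd w}"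

definition Xs :: "nat \<Rightarrow> nat set \<Rightarrow> nat \<Rightarrow> nat list set" where
  "Xs a S i = {x. length x = i \<and> gd x \<and> set x \<union> {a} = {s\<in>S. s \<le> a}}"

lemma finite_W: "finite S \<Longrightarrow> finite (W n S)"
  by (rule finite_subset[OF _ finite_lists_length_eq[of S n]]) (auto simp: W_def)

lemma finite_Xs: "finite S \<Longrightarrow> finite (Xs a S i)"
  by (rule finite_subset[OF _ finite_lists_length_eq[of S i]]) (auto simp: Xs_def)

lemma W_decomp:
  "W (Suc n) S = (\<Union>a\<in>S. \<Union>i\<in>{..n}. (\<lambda>(x,y). a # x @ y) ` (Xs a S i \<times> W (n - i) {s\<in>S. a < s}))"
proof
  show "W (Suc n) S \<subseteq> (\<Union>a\<in>S. \<Union>i\<in>{..n}. (\<lambda>(x,y). a # x @ y) ` (Xs a S i \<times> W (n - i) {s\<in>S. a < s}))"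
  proof
    fix w assume w: "w \<in> W (Suc n) S"
    then obtain a v where wv: "w = a # v" by (cases w) (auto simp: W_def)
    define x where "x = takeWhile (\<lambda>c. c \<le> a) v"
    define y where "y = dropWhile (\<lambda>c. c \<le> a) v"
    have v: "v = x @ y" by (simp add: x_def y_def)
    have gv: "gd v" and c: "cnd a v" using w wv by (auto simp: W_def)
    have xa: "\<forall>c\<in>set x. c \<le> a" unfolding x_def by (meson set_takeWhileD)
    have ya: "\<forall>c\<in>set y. a < c" using c by (simp add: cnd_def y_def)
    have gxy: "gd x" "gd y" using gv gd_append[OF xa ya] v by auto
    have lens: "length x \<le> n" "length y = n - length x" using w wv v by (auto simp: W_def)
    have setw: "set w = S" using w by (simp add: W_def)
    have aS: "a \<in> S" using setw wv by auto
    have sx: "set x \<union> {a} = {s\<in>S. s \<le> a}" using setw wv v xa ya by auto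
    have sy: "set y = {s\<in>S. a < s}" using setw wv v xa ya by auto
    have "x \<in> Xs a S (length x)" using sx gxy by (simp add: Xs_def)
    moreover have "y \<in> W (n - length x) {s\<in>S. a < s}" using sy gxy lens by (simp add: W_def)
    ultimately show "w \<in> (\<Union>a\<in>S. \<Union>i\<in>{..n}. (\<lambda>(x,y). a # x @ y) ` (Xs a S i \<times> W (n - i) {s\<in>S. a < s}))"
      using aS lens wv v by (intro UN_I[of a] UN_I[of "length x"]) (auto intro: image_eqI[of _ _ "(x,y)"])
  qed
next
  show "(\<Union>a\<in>S. \<Union>i\<in>{..n}. (\<lambda>(x,y). a # x @ y) ` (Xs a S i \<times> W (n - i) {s\<in>S. a < s})) \<subseteq> W (Suc n) S"
  proof (clarsimp)
    fix a i x y assume aS: "a \<in> S" and i: "i \<le> n" and x: "x \<in> Xs a S i" and y: "y \<in> W (n - i) {s\<in>S. a < s}"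
    have xa: "\<forall>c\<in>set x. c \<le> a" using x by (auto simp: Xs_def)
    have ya: "\<forall>c\<in>set y. a < c" using y by (auto simp: W_def)
    have "cnd a (x @ y)" using xa ya dropWhile_gt[OF ya, of a] by (simp add: cnd_def dropWhile_append)
    moreover have "gd (x @ y)" using gd_append[OF xa ya] x y by (simp add: Xs_def W_def)
    moreover have "length (a # x @ y) = Suc n" using x y i by (simp add: Xs_def W_def)
    moreover have "set (a # x @ y) = S"
    proof -
      have "set x \<union> {a} = {s\<in>S. s \<le> a}" "set y = {s\<in>S. a < s}" using x y by (auto simp: Xs_def W_def)
      then show ?thesis by auto
    qed
    ultimately show "a # x @ y \<in> W (Suc n) S" by (simp add: W_def)
  qed
qed

lemma card_W_Suc:
  assumes "finite S"
  shows "card (W (Suc n) S) = (\<Sum>a\<in>S. \<Sum>i\<le>n. card (Xs a S i) * card (W (n - i) {s\<in>S. a < s}))"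
proof -
  let ?G = "\<lambda>a i. (\<lambda>(x,y). a # x @ y) ` (Xs a S i \<times> W (n - i) {s\<in>S. a < s})"
  have fin: "finite (?G a i)" for a i using finite_W finite_Xs assms by auto
  have cG: "card (?G a i) = card (Xs a S i) * card (W (n - i) {s\<in>S. a < s})" for a i
  proof -
    have "inj_on (\<lambda>(x,y). a # x @ y) (Xs a S i \<times> W (n - i) {s\<in>S. a < s})"
    proof (rule inj_onI, clarsimp)
      fix x y x' y' assume "x \<in> Xs a S i" "y \<in> W (n - i) {s\<in>S. a < s}" "x' \<in> Xs a S i" "y' \<in> W (n - i) {s\<in>S. a < s}"
        "x @ y = x' @ y'"
      then show "x = x' \<and> y = y'" by (intro split_unique[of x a y x' y']) (auto simp: Xs_def W_def)
    qed
    then show ?thesis by (simp add: card_image card_cartesian_product)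
  qed
  have cA: "card (\<Union>i\<in>{..n}. ?G a i) = (\<Sum>i\<le>n. card (?G a i))" for a
  proof (rule card_UN_disjoint)
    show "\<forall>i\<in>{..n}. \<forall>j\<in>{..n}. i \<noteq> j \<longrightarrow> ?G a i \<inter> ?G a j = {}"
    proof (intro ballI impI)
      fix i j :: nat assume "i \<noteq> j"
      show "?G a i \<inter> ?G a j = {}"
      proof (rule ccontr)
        assume "?G a i \<inter> ?G a j \<noteq> {}"
        then obtain x y x' y' where "x \<in> Xs a S i" "y \<in> W (n - i) {s\<in>S. a < s}" "x' \<in> Xs a S j" "y' \<in> W (n - j) {s\<in>S. a < s}"
          "x @ y = x' @ y'" by auto
        then have "x = x'" by (intro conjunct1[OF split_unique[of x a y x' y']]) (auto simp: Xs_def W_def)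
        then show False using \<open>x \<in> Xs a S i\<close> \<open>x' \<in> Xs a S j\<close> \<open>i \<noteq> j\<close> by (auto simp: Xs_def)
      qed
    qed
  qed (use fin in auto)
  have "card (W (Suc n) S) = (\<Sum>a\<in>S. card (\<Union>i\<in>{..n}. ?G a i))"
    unfolding W_decomp
  proof (rule card_UN_disjoint)
    have hd: "hd w = a" if "w \<in> (\<Union>i\<in>{..n}. ?G a i)" for w and a :: nat
    proof -
      from that obtain i p where "w = (\<lambda>(x,y). a # x @ y) p" by blast
      then show ?thesis by (cases p) simp
    qed
    show "\<forall>a\<in>S. \<forall>b\<in>S. a \<noteq> b \<longrightarrow> (\<Union>i\<in>{..n}. ?G a i) \<inter> (\<Union>i\<in>{..n}. ?G b i) = {}"
    proof (intro ballI impI)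
      fix a b :: nat assume "a \<noteq> b"
      show "(\<Union>i\<in>{..n}. ?G a i) \<inter> (\<Union>i\<in>{..n}. ?G b i) = {}"
      proof (rule ccontr)
        assume "(\<Union>i\<in>{..n}. ?G a i) \<inter> (\<Union>i\<in>{..n}. ?G b i) \<noteq> {}"
        then obtain w where "w \<in> (\<Union>i\<in>{..n}. ?G a i)" "w \<in> (\<Union>i\<in>{..n}. ?G b i)" by blast
        then show False using hd[of w a] hd[of w b] \<open>a \<noteq> b\<close> by simp
      qed
    qed
  qed (use assms fin in simp_all)
  then show ?thesis using cA cG by simp
qed

lemma card_Xs:
  assumes "finite S" "a \<in> S"
  shows "card (Xs a S i) = card (W i {s\<in>S. s \<le> a}) + card (W i {s\<in>S. s < a})"
proof -
  have "Xs a S i = W i {s\<in>S. s \<le> a} \<union> W i {s\<in>S. s < a}"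
  proof (rule set_eqI)
    fix x :: "nat list"
    have "set x \<union> {a} = {s\<in>S. s \<le> a} \<longleftrightarrow> set x = {s\<in>S. s \<le> a} \<or> set x = {s\<in>S. s < a}"
    proof
      assume h: "set x \<union> {a} = {s\<in>S. s \<le> a}"
      show "set x = {s\<in>S. s \<le> a} \<or> set x = {s\<in>S. s < a}"
      proof (cases "a \<in> set x")
        case True
        then have "set x \<union> {a} = set x" by blast
        then show ?thesis using h by simp
      next
        case False
        then have "set x = (set x \<union> {a}) - {a}" by blast
        also have "\<dots> = {s\<in>S. s \<le> a} - {a}" by (simp only: h)
        also have "\<dots> = {s\<in>S. s < a}" by (rule set_eqI) (simp add: less_le; blast)
        finally show ?thesis by simp
      qed
    next
      assume hx: "set x = {s\<in>S. s \<le> a} \<or> set x = {s\<in>S. s < a}"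
      have e1: "{s\<in>S. s < a} \<union> {a} = {s\<in>S. s \<le> a}" using assms(2) by (rule_tac set_eqI) (simp add: le_less; blast)
      have e2: "{s\<in>S. s \<le> a} \<union> {a} = {s\<in>S. s \<le> a}" using assms(2) by blast
      from hx show "set x \<union> {a} = {s\<in>S. s \<le> a}" using e1 e2 by (elim disjE) simp_all
    qed
    then show "x \<in> Xs a S i \<longleftrightarrow> x \<in> W i {s\<in>S. s \<le> a} \<union> W i {s\<in>S. s < a}"
      unfolding Xs_def W_def mem_Collect_eq Un_iff by blast
  qed
  moreover have "W i {s\<in>S. s \<le> a} \<inter> W i {s\<in>S. s < a} = {}"
  proof -
    have "{s\<in>S. s \<le> a} \<noteq> {s\<in>S. s < a}" using assms(2) by blast
    then show ?thesis unfolding W_def by blast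
  qed
  ultimately show ?thesis using finite_W assms(1) by (simp add: card_Un_disjoint)
qed

lemma rank_sum:
  fixes S :: "nat set"
  assumes "finite S"
  shows "(\<Sum>a\<in>S. h (card {s\<in>S. s \<le> a})) = (\<Sum>j\<in>{1..card S}. (h j :: 'b::comm_monoid_add))"
proof -
  define r where "r = (\<lambda>a::nat. card {s\<in>S. s \<le> a})"
  have mono: "r a < r b" if "a \<in> S" "b \<in> S" "a < b" for a b
  proof -
    have "{s\<in>S. s \<le> a} \<subset> {s\<in>S. s \<le> b}"
    proof (rule psubsetI)
      show "{s\<in>S. s \<le> a} \<subseteq> {s\<in>S. s \<le> b}" using that by auto
      have "b \<notin> {s\<in>S. s \<le> a}" "b \<in> {s\<in>S. s \<le> b}" using that by auto
      then show "{s\<in>S. s \<le> a} \<noteq> {s\<in>S. s \<le> b}" by blast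
    qed
    then show ?thesis unfolding r_def using assms by (intro psubset_card_mono) auto
  qed
  have inj: "inj_on r S"
  proof (rule inj_onI)
    fix a b assume ab: "a \<in> S" "b \<in> S" "r a = r b"
    show "a = b"
    proof (rule ccontr)
      assume "a \<noteq> b"
      then have "a < b \<or> b < a" by (rule neq_iff[THEN iffD1])
      then show False using mono[of a b] mono[of b a] ab by auto
    qed
  qed
  have sub: "r ` S \<subseteq> {1..card S}"
  proof
    fix j assume "j \<in> r ` S"
    then obtain a where a: "a \<in> S" "j = r a" by auto
    have "a \<in> {s\<in>S. s \<le> a}" using a by simp
    then have "0 < r a" unfolding r_def using assms by (auto simp: card_gt_0_iff)
    moreover have "r a \<le> card S" unfolding r_def using assms by (intro card_mono) auto
    ultimately show "j \<in> {1..card S}" using a by simp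
  qed
  have "card (r ` S) = card {1..card S}" using card_image[OF inj] by simp
  then have "r ` S = {1..card S}"
    using sub card_subset_eq[of "{1..card S}" "r ` S"] by simp
  then have "bij_betw r S {1..card S}" using inj by (simp add: bij_betw_def)
  then have "(\<Sum>a\<in>S. h (r a)) = (\<Sum>j\<in>{1..card S}. h j)" by (rule sum.reindex_bij_betw)
  then show ?thesis by (simp add: r_def)
qed



abbreviation Q :: "nat \<Rightarrow> int poly" where "Q n \<equiv> Tp n 0 + Tp n (Suc 0)"

lemma Q_rec: "Tp (Suc m) (Suc 0) = (\<Sum>i\<le>m. (Tp i (Suc 0) + [:0,1:] * Q i) * Q (m - i))"
proof -
  have c11: "(\<Sum>i\<le>m. Tp i (Suc 0) * Tp (m - i) (Suc 0)) = Tp m (Suc (Suc 0))" using Tp_conv[of m "Suc 0" "Suc 0"] by simp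
  have c10: "(\<Sum>i\<le>m. Tp i (Suc 0) * Tp (m - i) 0) = Tp m (Suc 0)" using Tp_conv[of m "Suc 0" 0] by simp
  have c00: "(\<Sum>i\<le>m. Tp i 0 * Tp (m - i) 0) = Tp m 0" using Tp_conv[of m 0 0] by simp
  have c01: "(\<Sum>i\<le>m. Tp i 0 * Tp (m - i) (Suc 0)) = Tp m (Suc 0)" using Tp_conv[of m 0 "Suc 0"] by simp
  have "(\<Sum>i\<le>m. (Tp i (Suc 0) + [:0,1:] * Q i) * Q (m - i)) =
     (\<Sum>i\<le>m. Tp i (Suc 0) * Tp (m - i) 0) + (\<Sum>i\<le>m. Tp i (Suc 0) * Tp (m - i) (Suc 0))
     + [:0,1:] * ((\<Sum>i\<le>m. Tp i 0 * Tp (m - i) 0) + (\<Sum>i\<le>m. Tp i 0 * Tp (m - i) (Suc 0))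
        + (\<Sum>i\<le>m. Tp i (Suc 0) * Tp (m - i) 0) + (\<Sum>i\<le>m. Tp i (Suc 0) * Tp (m - i) (Suc 0)))"
    by (simp only: sum.distrib sum_distrib_left distrib_right distrib_left mult.assoc add.assoc)
  also have "\<dots> = Tp m (Suc 0) + Tp m (Suc (Suc 0)) + [:0,1:] * (Tp m 0 + Tp m (Suc 0) + Tp m (Suc 0) + Tp m (Suc (Suc 0)))"
    by (simp only: c11 c10 c00 c01)
  also have "\<dots> = [:0,1:] * Tp m 0 + [:1,2:] * Tp m (Suc 0) + [:1,1:] * Tp m (Suc (Suc 0))"
  proof -
    have a: "[:1,2:] = 1 + [:0,1:] + ([:0,1:] :: int poly)" by (simp add: one_pCons)
    have b: "[:1,1:] = 1 + ([:0,1:] :: int poly)" by (simp add: one_pCons)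
    have g: "x1 + x2 + t * (x0 + x1 + x1 + x2) = t * x0 + (1 + t + t) * x1 + (1 + t) * x2"
      for t x0 x1 x2 :: "int poly" by (simp add: algebra_simps)
    show ?thesis unfolding a b by (rule g)
  qed
  also have "\<dots> = Tp (Suc m) (Suc 0)" by (simp add: numeral_2_eq_2)
  finally show ?thesis by simp
qed

lemma coeff_Tp1_0: "coeff (Tp i (Suc 0)) 0 = 0"
proof (cases i)
  case 0 then show ?thesis by simp
next
  case (Suc i')
  have "int i * coeff (Tp i (Suc 0)) 0 = 0" using Tp_closed[of i "Suc 0" 0] by (simp add: binomial_eq_0)
  then show ?thesis using Suc by simp
qed

lemma coeff_Q_step: "coeff (Tp i (Suc 0) + [:0,1:] * Q i) j = (if j = 0 then 0 else coeff (Q i) j + coeff (Q i) (j - 1))"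
proof (cases j)
  case 0 then show ?thesis by (simp add: coeff_Tp1_0)
next
  case (Suc j')
  have "coeff (Tp i 0) (Suc j') = 0" by (simp add: Tp_zero)
  then show ?thesis using Suc by (simp add: mult_pCons_left)
qed

lemma card_W_0: "finite S \<Longrightarrow> card (W 0 S) = (if S = {} then 1 else 0)"
proof -
  have "W 0 S = (if S = {} then {[]} else {})" by (auto simp: W_def)
  then show ?thesis by simp
qed

lemma W_count:
  assumes "finite S"
  shows "int (card (W n S)) = coeff (Q n) (card S)"
  using assms
proof (induction n arbitrary: S rule: less_induct)
  case (less n)
  show ?case
  proof (cases n)
    case 0
    then show ?thesis using less.prems by (simp add: card_W_0)
  next
    case (Suc m)
    let ?d = "card S"
    let ?r = "\<lambda>a. card {s\<in>S. s \<le> a}"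
    let ?q = "\<lambda>i j. coeff (Q i) j"
    define h where "h = (\<lambda>j. \<Sum>i\<le>m. (?q i j + ?q i (j - 1)) * ?q (m - i) (?d - j))"
    have IH: "int (card (W i T)) = ?q i (card T)" if "i \<le> m" "finite T" for i T
      using less.IH[of i T] that Suc by simp
    have fin: "finite {s\<in>S. P s}" for P using less.prems by simp
    have cr1: "card {s\<in>S. s < a} = ?r a - 1" if "a \<in> S" for a
    proof -
      have "{s\<in>S. s \<le> a} = insert a {s\<in>S. s < a}" using that by auto
      then show ?thesis using fin[of "\<lambda>s. s < a"] by simp
    qed
    have cr2: "card {s\<in>S. a < s} = ?d - ?r a" if "a \<in> S" for a
    proof -
      have "S = {s\<in>S. s \<le> a} \<union> {s\<in>S. a < s}" by auto
      moreover have "{s\<in>S. s \<le> a} \<inter> {s\<in>S. a < s} = {}" by auto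
      ultimately have "?d = ?r a + card {s\<in>S. a < s}"
        using fin card_Un_disjoint by metis
      then show ?thesis by simp
    qed
    have "int (card (W n S)) = (\<Sum>a\<in>S. \<Sum>i\<le>m. int (card (Xs a S i)) * int (card (W (m - i) {s\<in>S. a < s})))"
      using card_W_Suc[OF less.prems, of m] Suc by simp
    also have "\<dots> = (\<Sum>a\<in>S. h (?r a))"
    proof (rule sum.cong[OF refl])
      fix a assume a: "a \<in> S"
      show "(\<Sum>i\<le>m. int (card (Xs a S i)) * int (card (W (m - i) {s\<in>S. a < s}))) = h (?r a)"
        unfolding h_def
      proof (rule sum.cong[OF refl])
        fix i assume i: "i \<in> {..m}"
        have "int (card (Xs a S i)) = ?q i (?r a) + ?q i (?r a - 1)"
          using card_Xs[OF less.prems a, of i] IH[of i] i fin cr1[OF a] by simp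
        moreover have "int (card (W (m - i) {s\<in>S. a < s})) = ?q (m - i) (?d - ?r a)"
          using IH[of "m - i"] fin cr2[OF a] by simp
        ultimately show "int (card (Xs a S i)) * int (card (W (m - i) {s\<in>S. a < s})) =
          (?q i (?r a) + ?q i (?r a - 1)) * ?q (m - i) (?d - ?r a)" by simp
      qed
    qed
    also have "\<dots> = (\<Sum>j\<in>{1..?d}. h j)" by (rule rank_sum[OF less.prems])
    also have "\<dots> = coeff (Q n) ?d"
    proof -
      have "coeff (Q n) ?d = coeff (Tp (Suc m) (Suc 0)) ?d" using Suc by (simp add: Tp_zero)
      also have "\<dots> = (\<Sum>i\<le>m. \<Sum>j\<le>?d. coeff (Tp i (Suc 0) + [:0,1:] * Q i) j * ?q (m - i) (?d - j))"
        unfolding Q_rec coeff_sum coeff_mult by simp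
      also have "\<dots> = (\<Sum>i\<le>m. \<Sum>j\<in>{1..?d}. (?q i j + ?q i (j - 1)) * ?q (m - i) (?d - j))"
      proof (rule sum.cong[OF refl])
        fix i
        have z: "coeff (Tp i (Suc 0) + [:0,1:] * Q i) 0 = 0" by (simp only: coeff_Q_step) simp
        have "(\<Sum>j\<le>?d. coeff (Tp i (Suc 0) + [:0,1:] * Q i) j * ?q (m - i) (?d - j))
            = (\<Sum>j\<in>{1..?d}. coeff (Tp i (Suc 0) + [:0,1:] * Q i) j * ?q (m - i) (?d - j))"
        proof (rule sum.mono_neutral_right)
          show "\<forall>j\<in>{..?d} - {1..?d}. coeff (Tp i (Suc 0) + [:0,1:] * Q i) j * ?q (m - i) (?d - j) = 0"
          proof
            fix j assume "j \<in> {..?d} - {1..?d}"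
            then have "j = 0" by auto
            then show "coeff (Tp i (Suc 0) + [:0,1:] * Q i) j * ?q (m - i) (?d - j) = 0" using z by simp
          qed
        qed auto
        also have "\<dots> = (\<Sum>j\<in>{1..?d}. (?q i j + ?q i (j - 1)) * ?q (m - i) (?d - j))"
          by (rule sum.cong[OF refl]) (subst coeff_Q_step, simp)
        finally show "(\<Sum>j\<le>?d. coeff (Tp i (Suc 0) + [:0,1:] * Q i) j * ?q (m - i) (?d - j))
            = (\<Sum>j\<in>{1..?d}. (?q i j + ?q i (j - 1)) * ?q (m - i) (?d - j))" .
      qed
      also have "\<dots> = (\<Sum>j\<in>{1..?d}. h j)" unfolding h_def by (rule sum.swap)
      finally show ?thesis by simp
    qed
    finally show ?thesis .
  qed
qed



lemma sum_Pow_card: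
  assumes "finite A"
  shows "(\<Sum>S\<in>Pow A. g (card S)) = (\<Sum>d\<le>card A. of_nat (card A choose d) * (g d :: real))"
proof -
  let ?B = "\<lambda>d. {S. S \<subseteq> A \<and> card S = d}"
  have P: "Pow A = (\<Union>d\<in>{..card A}. ?B d)"
  proof
    show "Pow A \<subseteq> (\<Union>d\<in>{..card A}. ?B d)"
    proof
      fix S assume "S \<in> Pow A"
      then have "S \<subseteq> A" "card S \<le> card A" using assms by (auto intro: card_mono)
      then show "S \<in> (\<Union>d\<in>{..card A}. ?B d)" by auto
    qed
  qed auto
  have fin: "finite (?B d)" for d
    by (rule finite_subset[of _ "Pow A"]) (use assms in auto)
  have "(\<Sum>S\<in>Pow A. g (card S)) = (\<Sum>d\<le>card A. \<Sum>S\<in>?B d. g (card S))"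
    unfolding P by (rule sum.UNION_disjoint) (use fin in auto)
  also have "\<dots> = (\<Sum>d\<le>card A. \<Sum>S\<in>?B d. g d)"
    by (rule sum.cong[OF refl], rule sum.cong[OF refl]) auto
  also have "\<dots> = (\<Sum>d\<le>card A. of_nat (card A choose d) * g d)"
    using n_subsets[OF assms] by simp
  finally show ?thesis .
qed

lemma e_count_sum: "e_count n k = (\<Sum>S\<in>Pow {1..k}. card (W n S))"
proof -
  have eq: "{w :: nat list. length w = n \<and> set w \<subseteq> {1..k} \<and> avoids_010 w \<and> avoids_120 w}
       = (\<Union>S\<in>Pow {1..k}. W n S)"
    unfolding W_def using good_iff_gd by blast
  have "card (\<Union>S\<in>Pow {1..k}. W n S) = (\<Sum>S\<in>Pow {1..k}. card (W n S))"
  proof (rule card_UN_disjoint)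
    show "\<forall>S\<in>Pow {1..k}. finite (W n S)"
    proof
      fix S assume "S \<in> Pow {1..k}"
      then have "finite S" by (meson PowD finite_atLeastAtMost finite_subset)
      then show "finite (W n S)" by (rule finite_W)
    qed
    show "\<forall>S\<in>Pow {1..k}. \<forall>T\<in>Pow {1..k}. S \<noteq> T \<longrightarrow> W n S \<inter> W n T = {}"
      unfolding W_def by blast
  qed simp
  then show ?thesis unfolding e_count_def eq .
qed

theorem mainTheorem6:
  fixes n k :: nat
  assumes "n \<ge> 1"
  shows "real (e_count n k) =
    (\<Sum>d = 1..k. real (k choose d) * (1 / real d) * real ((n - 1) choose (d - 1))
                  * real ((n + d) choose (d - 1)))"
proof -
  define q where "q d = real_of_int (coeff (Q n) d)" for d
  have "real (e_count n k) = (\<Sum>S\<in>Pow {1..k}. real (card (W n S)))"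
    unfolding e_count_sum by simp
  also have "\<dots> = (\<Sum>S\<in>Pow {1..k}. q (card S))"
  proof (rule sum.cong[OF refl])
    fix S assume "S \<in> Pow {1..k}"
    then have "finite S" by (meson PowD finite_atLeastAtMost finite_subset)
    from W_count[OF this, of n] show "real (card (W n S)) = q (card S)"
      unfolding q_def by (metis of_int_of_nat_eq)
  qed
  also have "\<dots> = (\<Sum>d\<le>k. real (k choose d) * q d)"
    using sum_Pow_card[of "{1..k}" q] by simp
  also have "\<dots> = (\<Sum>d = 1..k. real (k choose d) * (1 / real d) * real ((n - 1) choose (d - 1))
                  * real ((n + d) choose (d - 1)))"
  proof -
    have qd: "real n * q d = real (n choose d) * real ((n + d) choose (n + 1))" for d
    proof -
      have "Tp n 0 = 0" using assms by (simp add: Tp_zero)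
      then have "q d = real_of_int (coeff (Tp n (Suc 0)) d)" by (simp add: q_def)
      moreover have h: "int n * coeff (Tp n (Suc 0)) d = int (n choose d) * int ((n + d) choose (n + 1))"
        using Tp_closed[of n "Suc 0" d] by simp
      have h2: "real_of_int (int n * coeff (Tp n (Suc 0)) d) = real_of_int (int (n choose d) * int ((n + d) choose (n + 1)))"
        using h by (rule arg_cong)
      ultimately show ?thesis
        using h2 unfolding of_int_mult of_int_of_nat_eq by simp
    qed
    have q0: "q 0 = 0"
      using qd[of 0] assms by (simp add: binomial_eq_0)
    have "(\<Sum>d\<le>k. real (k choose d) * q d) = (\<Sum>d = 1..k. real (k choose d) * q d)"
    proof (rule sum.mono_neutral_right)
      show "\<forall>i\<in>{..k} - {1..k}. real (k choose i) * q i = 0"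
      proof
        fix i assume "i \<in> {..k} - {1..k}"
        then have "i = 0" by auto
        then show "real (k choose i) * q i = 0" using q0 by simp
      qed
    qed auto
    also have "\<dots> = (\<Sum>d = 1..k. real (k choose d) * (1 / real d) * real ((n - 1) choose (d - 1))
                  * real ((n + d) choose (d - 1)))"
    proof (rule sum.cong[OF refl])
      fix d assume d: "d \<in> {1..k}"
      then have d1: "d \<ge> 1" by simp
      have s: "(n + d) choose (d - 1) = (n + d) choose (n + 1)"
        using binomial_symmetric[of "d - 1" "n + d"] d1 by simp
      have tn: "d * (n choose d) = n * ((n - 1) choose (d - 1))"
        using times_binomial_minus1_eq[of d n] d1 by simp
      have t: "real d * real (n choose d) = real n * real ((n - 1) choose (d - 1))"
        using arg_cong[OF tn, of real] by simp
      have "real d * (real n * q d) = (real d * real (n choose d)) * real ((n + d) choose (n + 1))"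
        unfolding qd by (simp only: mult.assoc)
      also have "\<dots> = real n * (real ((n - 1) choose (d - 1)) * real ((n + d) choose (n + 1)))"
        unfolding t by (simp only: mult.assoc)
      finally have "real d * (real n * q d) = real n * (real ((n - 1) choose (d - 1)) * real ((n + d) choose (n + 1)))" .
      then have "q d = (1 / real d) * real ((n - 1) choose (d - 1)) * real ((n + d) choose (n + 1))"
        using assms d1 by (simp add: field_simps)
      then show "real (k choose d) * q d = real (k choose d) * (1 / real d) * real ((n - 1) choose (d - 1))
                  * real ((n + d) choose (d - 1))"
        unfolding s by simp
    qed
    finally show ?thesis .
  qed
  finally show ?thesis .
qed


end
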